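(* Let $0<\alpha<1$, $\sigma>0$, $T>0$, $h=\sigma^2\alpha^2$, $\eta=\frac{4\pi^2\alpha}{\sigma^2\alpha^2}=\frac{4\pi^2}{\sigma^2\alpha}$, let $\gamma>0$, and for $x\in[e^{\frac1\alpha(\gamma-T)},1]$ let $a=2\alpha\pi(T+\alpha\log x)$ and $Q(x)=\frac{x^\alpha}{e^{2\pi a/h}-1}$. Then uniformly for $x\in[e^{\frac1\alpha(\gamma-T)},1]$: if $\eta\ge1$ (i.e. $h\le4\pi^2\alpha$), then $$\frac{1}{e^{\eta T}-1}\le Q(x)\le\frac{e^{\gamma}e^{-T}}{e^{\eta\gamma}-1};$$ if $\eta<1$ (i.e. $h>4\pi^2\alpha$), then $$\frac{(1-\eta)^{1-\frac1\eta}e^{-T}}{\eta}\le Q(x)\le\max\left\{\frac{1}{e^{\eta T}-1},\frac{e^\gamma e^{-T}}{e^{\eta\gamma}-1}\right\}.$$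
   Context: In the paper $\gamma=\alpha\log\!\Big(\frac{\frac1\kappa\sqrt{u^*}+1}{\sqrt{u^*}-1}\Big)+\sqrt{u^*}$ with $\kappa=\frac{\alpha}{1-\alpha}$ and $u^*=\frac{1+(1-2\alpha)\sqrt{4\alpha-4\alpha^2+1}}{2(1-\alpha)^2}$, and it is used with $\gamma<T$ so the interval is nonempty. *)

theory Defs
  imports Complex_Main
begin

end

theory Submission
  imports Defs
begin
definition gg :: "real \<Rightarrow> real \<Rightarrow> real" where
  "gg e t = exp ((e-1)*t) - exp (-t)"

lemma gg_der:
  fixes e t s :: real
  shows "((gg e) has_real_derivative ((e-1)*exp((e-1)*t) + exp(-t))) (at t)"
  unfolding gg_def by (auto intro!: derivative_eq_intros)

lemma gder_eq_aux:
  fixes e t s :: real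
  shows "exp((e-1)*t) = exp(e*t)*exp(-t)"
proof -
  have "exp((e-1)*t) = exp(e*t + -t)" by (simp add: algebra_simps)
  thus ?thesis by (simp only: exp_add)
qed

lemma gder_eq:
  fixes e t s :: real
  shows "(e-1)*exp((e-1)*t) + exp(-t) = exp(-t) * (1 - (1-e)*exp(e*t))"
proof -
  have "exp((e-1)*t) = exp(e*t + -t)" by (simp add: algebra_simps)
  hence "exp((e-1)*t) = exp(e*t)*exp(-t)" by (simp only: exp_add)
  thus ?thesis by (simp add: algebra_simps)
qed

lemma gder_nonneg:
  fixes e t s :: real
  assumes "0<e" "e<1" "e*t \<le> - ln (1-e)"
  shows "(e-1)*exp((e-1)*t) + exp(-t) \<ge> 0"
proof -
  have "exp(e*t) \<le> exp(- ln(1-e))" using assms(3) by (rule exp_mono)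
  also have "\<dots> = 1/(1-e)" using assms by (simp add: exp_minus inverse_eq_divide)
  finally have "(1-e)*exp(e*t) \<le> 1" using assms by (simp add: field_simps)
  thus ?thesis unfolding gder_eq by simp
qed

lemma gder_nonpos:
  fixes e t s :: real
  assumes "0<e" "e<1" "e*t \<ge> - ln (1-e)"
  shows "(e-1)*exp((e-1)*t) + exp(-t) \<le> 0"
proof -
  have "exp(e*t) \<ge> exp(- ln(1-e))" using assms(3) by (rule exp_mono)
  moreover have "exp(- ln(1-e)) = 1/(1-e)" using assms by (simp add: exp_minus inverse_eq_divide)
  ultimately have "(1-e)*exp(e*t) \<ge> 1" using assms by (simp add: field_simps)
  thus ?thesis unfolding gder_eq by (simp add: mult_nonneg_nonpos)
qed

lemma gg_inc:
  fixes e t s :: real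
  assumes "0<e" "e<1" "s \<le> t" "e*t \<le> - ln (1-e)"
  shows "gg e s \<le> gg e t"
proof (rule deriv_nonneg_imp_mono[OF gg_der])
  fix x assume "x \<in> {s..t}"
  hence "e*x \<le> e*t" using assms by (simp add: mult_left_mono)
  hence "e*x \<le> - ln(1-e)" using assms(4) by linarith
  thus "(e-1)*exp((e-1)*x) + exp(-x) \<ge> 0" by (rule gder_nonneg[OF assms(1,2)])
qed (use assms in auto)

lemma gg_dec:
  fixes e t s :: real
  assumes "0<e" "e<1" "s \<le> t" "e*s \<ge> - ln (1-e)"
  shows "gg e t \<le> gg e s"
proof -
  have "(\<lambda>x. - gg e x) s \<le> (\<lambda>x. - gg e x) t"
  proof (rule deriv_nonneg_imp_mono[where g="\<lambda>x. - gg e x"])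
    fix x assume "x \<in> {s..t}"
    show "((\<lambda>x. - gg e x) has_real_derivative -((e-1)*exp((e-1)*x) + exp(-x))) (at x)"
      using gg_der by (rule DERIV_minus)
  next
    fix x assume "x \<in> {s..t}"
    hence "e*x \<ge> e*s" using assms by (simp add: mult_left_mono)
    hence "e*x \<ge> - ln(1-e)" using assms(4) by linarith
    hence "(e-1)*exp((e-1)*x) + exp(-x) \<le> 0" by (rule gder_nonpos[OF assms(1,2)])
    thus "-((e-1)*exp((e-1)*x) + exp(-x)) \<ge> 0" by simp
  qed (use assms in auto)
  thus ?thesis by simp
qed

lemma gg_mono1:
  fixes e t s :: real
  assumes "1 \<le> e" "s \<le> t"
  shows "gg e s \<le> gg e t"
proof -
  have "(e-1)*s \<le> (e-1)*t" using assms by (simp add: mult_left_mono)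
  hence A: "exp ((e-1)*s) \<le> exp((e-1)*t)" by simp
  have B: "exp(-t) \<le> exp(-s)" using assms by simp
  show ?thesis unfolding gg_def using A B by linarith
qed

lemma gg_max:
  fixes e t s :: real
  assumes "0<e" "e<1"
  shows "gg e t \<le> e * (1-e) powr (1/e - 1)"
proof -
  define t0 where "t0 = - ln (1-e) / e"
  have et0: "e*t0 = - ln(1-e)" using assms by (simp add: t0_def)
  have "gg e t \<le> gg e t0"
  proof (cases "t \<le> t0")
    case True thus ?thesis using gg_inc[OF assms True] et0 by simp
  next
    case False thus ?thesis using gg_dec[OF assms, of t0 t] et0 by simp
  qed
  also have "gg e t0 = e * (1-e) powr (1/e - 1)"
  proof -
    have "exp(-t0) = (1-e) powr (1/e)" using assms
      by (simp add: t0_def powr_def)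
    have "exp((e-1)*t0) = exp(e*t0) * exp(-t0)" by (metis gder_eq_aux)
    also have "exp(e*t0) = 1/(1-e)" using assms et0 by (simp add: exp_minus inverse_eq_divide)
    finally have A: "gg e t0 = exp(-t0) * (1/(1-e) - 1)" unfolding gg_def by (simp add: algebra_simps)
    have D: "(1-e) powr (1/e - 1) = (1-e) powr (1/e) / (1-e)" using assms
      by (simp add: powr_diff)
    have C: "1/(1-e) - 1 = e/(1-e)" using assms by (simp add: field_simps)
    show ?thesis unfolding A D C \<open>exp(-t0) = _\<close> by simp
  qed
  finally show ?thesis .
qed

lemma gg_alt: fixes e t :: real shows "gg e t = exp(-t) * (exp(e*t) - 1)"
  unfolding gg_def using gder_eq_aux[of e t] by (simp add: algebra_simps)

lemma gg_pos: fixes e t :: real assumes "0<e" "0<t" shows "gg e t > 0"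
  unfolding gg_alt using assms by simp

lemma Qform: fixes e t T :: real assumes "0<e" "0<t"
  shows "exp(t-T)/(exp(e*t)-1) = exp(-T) / gg e t"
proof -
  have "exp(t-T) = exp(-T) / exp(-t)" by (simp add: exp_diff exp_minus field_simps)
  thus ?thesis unfolding gg_alt by simp
qed

theorem lemma4p1:
  fixes \<alpha> \<sigma> T \<gamma> h \<eta> :: real
    and a Q :: "real \<Rightarrow> real"
  assumes "0 < \<alpha>" and "\<alpha> < 1" and "0 < \<sigma>" and "0 < T"
    and "h = \<sigma>^2 * \<alpha>^2"
    and "\<eta> = 4 * pi^2 * \<alpha> / (\<sigma>^2 * \<alpha>^2)"
    and "0 < \<gamma>"
    and "\<And>x. a x = 2 * \<alpha> * pi * (T + \<alpha> * ln x)"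
    and "\<And>x. Q x = x powr \<alpha> / (exp (2 * pi * a x / h) - 1)"
  shows "(1 \<le> \<eta> \<longrightarrow>
            (\<forall>x \<in> {exp ((\<gamma> - T) / \<alpha>)..1}.
               1 / (exp (\<eta> * T) - 1) \<le> Q x \<and>
               Q x \<le> exp \<gamma> * exp (- T) / (exp (\<eta> * \<gamma>) - 1)))
       \<and> (\<eta> < 1 \<longrightarrow>
            (\<forall>x \<in> {exp ((\<gamma> - T) / \<alpha>)..1}.
               (1 - \<eta>) powr (1 - 1 / \<eta>) * exp (- T) / \<eta> \<le> Q x \<and>
               Q x \<le> max (1 / (exp (\<eta> * T) - 1))
                            (exp \<gamma> * exp (- T) / (exp (\<eta> * \<gamma>) - 1))))"
proof -
  have etapos: "\<eta> > 0" using assms(1,3,6) by simp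
  have key: "Q x = exp(-T) / gg \<eta> (T + \<alpha> * ln x) \<and> \<gamma> \<le> T + \<alpha> * ln x \<and> T + \<alpha> * ln x \<le> T"
    if x: "x \<in> {exp ((\<gamma> - T) / \<alpha>)..1}" for x
  proof -
    define t where "t = T + \<alpha> * ln x"
    have xpos: "x > 0" using x by (auto intro: less_le_trans[OF exp_gt_zero])
    have "ln (exp ((\<gamma> - T) / \<alpha>)) \<le> ln x" using x xpos by (subst ln_le_cancel_iff) auto
    hence "(\<gamma> - T) / \<alpha> \<le> ln x" by simp
    hence "\<gamma> - T \<le> \<alpha> * ln x" using assms(1) by (simp add: field_simps)
    hence t1: "\<gamma> \<le> t" unfolding t_def by linarith
    have "ln x \<le> 0" using x xpos by simp
    hence t2: "t \<le> T" unfolding t_def using assms(1) by (simp add: mult_nonneg_nonpos)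
    have "2 * pi * a x / h = \<eta> * t" unfolding assms(5,6,8) t_def using assms(1,3)
      by (simp add: field_simps power2_eq_square)
    moreover have "x powr \<alpha> = exp (t - T)" unfolding t_def using xpos by (simp add: powr_def)
    ultimately have "Q x = exp(t-T)/(exp(\<eta>*t)-1)" using assms(9) by simp
    also have "\<dots> = exp(-T) / gg \<eta> t" using Qform etapos t1 assms(7) by simp
    finally show ?thesis using t1 t2 unfolding t_def by simp
  qed
  have eT: "1 / (exp (\<eta> * T) - 1) = exp(-T) / gg \<eta> T"
    using Qform[OF etapos assms(4), of T] by simp
  have eg: "exp \<gamma> * exp (- T) / (exp (\<eta> * \<gamma>) - 1) = exp(-T) / gg \<eta> \<gamma>"
    using Qform[OF etapos assms(7), of T] by (simp add: exp_diff exp_minus field_simps)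
  have ggT: "gg \<eta> T > 0" using gg_pos etapos assms(4) by simp
  have ggg: "gg \<eta> \<gamma> > 0" using gg_pos etapos assms(7) by simp
  show ?thesis
  proof (intro conjI impI ballI)
    fix x assume e1: "1 \<le> \<eta>" and x: "x \<in> {exp ((\<gamma> - T) / \<alpha>)..1}"
    define t where "t = T + \<alpha> * ln x"
    from key[OF x] have Q: "Q x = exp(-T) / gg \<eta> t" and t1: "\<gamma> \<le> t" and t2: "t \<le> T"
      unfolding t_def by auto
    have p: "gg \<eta> t > 0" using gg_pos etapos t1 assms(7) by simp
    have "gg \<eta> t \<le> gg \<eta> T" using gg_mono1[OF e1 t2] .
    thus "1 / (exp (\<eta> * T) - 1) \<le> Q x" unfolding eT Q using p
      by (simp add: divide_left_mono)
    have "gg \<eta> \<gamma> \<le> gg \<eta> t" using gg_mono1[OF e1 t1] .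
    thus "Q x \<le> exp \<gamma> * exp (- T) / (exp (\<eta> * \<gamma>) - 1)" unfolding eg Q using ggg
      by (simp add: divide_left_mono)
  next
    fix x assume e1: "\<eta> < 1" and x: "x \<in> {exp ((\<gamma> - T) / \<alpha>)..1}"
    define t where "t = T + \<alpha> * ln x"
    from key[OF x] have Q: "Q x = exp(-T) / gg \<eta> t" and t1: "\<gamma> \<le> t" and t2: "t \<le> T"
      unfolding t_def by auto
    have p: "gg \<eta> t > 0" using gg_pos etapos t1 assms(7) by simp
    have M: "gg \<eta> t \<le> \<eta> * (1-\<eta>) powr (1/\<eta> - 1)" using gg_max[OF etapos e1] .
    have "(1 - \<eta>) powr (1 - 1 / \<eta>) * exp (- T) / \<eta> = exp(-T) / (\<eta> * (1-\<eta>) powr (1/\<eta> - 1))"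
    proof -
      have "(1 - \<eta>) powr (1 - 1 / \<eta>) = 1 / (1-\<eta>) powr (1/\<eta> - 1)"
        using e1 by (simp add: powr_minus_divide[symmetric])
      thus ?thesis by simp
    qed
    thus "(1 - \<eta>) powr (1 - 1 / \<eta>) * exp (- T) / \<eta> \<le> Q x" unfolding Q using p M
      by (simp add: divide_left_mono)
    show "Q x \<le> max (1 / (exp (\<eta> * T) - 1)) (exp \<gamma> * exp (- T) / (exp (\<eta> * \<gamma>) - 1))"
    proof (cases "\<eta> * t \<le> - ln (1-\<eta>)")
      case True
      have "gg \<eta> \<gamma> \<le> gg \<eta> t" using gg_inc[OF etapos e1 t1 True] .
      hence "Q x \<le> exp \<gamma> * exp (- T) / (exp (\<eta> * \<gamma>) - 1)" unfolding eg Q using ggg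
        by (simp add: divide_left_mono)
      thus ?thesis by simp
    next
      case False
      have "gg \<eta> T \<le> gg \<eta> t" using gg_dec[OF etapos e1 t2] False by simp
      hence "Q x \<le> 1 / (exp (\<eta> * T) - 1)" unfolding eT Q using ggT
        by (simp add: divide_left_mono)
      thus ?thesis by simp
    qed
  qed
qed

end
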